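(* Let $p \geq 5$ and let $L$ be the Laplacian of the graph $C_\infty \oplus K_p \oplus C_\infty$. Let $E_K \subset l^2$ be the span of the vectors $e_{-1}-e_{-k}$, $k=2,\ldots,p-2$ (equivalently, the $v \in l^2$ supported on $\{-p+2,\ldots,-1\}$ with entries summing to $0$), and $E_K^\perp$ its orthogonal complement. For $\lambda > 4$ let $\sigma_+ = \sigma_+(\lambda) = \tfrac12[(2-\lambda)+\sqrt{(2-\lambda)^2-4}]$ and $$F_S(\lambda) = (2-\lambda)\sigma_+ - (p-1-\lambda)(2-\lambda) + 2(p-2), \qquad F_A(\lambda) = \sigma_+ - (p+1-\lambda).$$ Then: (i) every eigenvector $v \in l^2 \cap E_K^\perp$ of $L$ with eigenvalue $\lambda > 4$ is either symmetric or antisymmetric; (ii) $\lambda > 4$ is the eigenvalue of a symmetric eigenvector $v \in l^2 \cap E_K^\perp$ of $L$ if and only if $F_S(\lambda) = 0$; (iii) $\lambda > 4$ is the eigenvalue of an antisymmetric eigenvector $v \in l^2 \cap E_K^\perp$ of $L$ if and only if $F_A(\lambda)=0$; (iv) each of the equations $F_A(\lambda)=0$ and $F_S(\lambda)=0$ has exactly one solution in $(p,p+2)$ and no solutions in $(4,p] \cup [p+2,+\infty)$.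
   Context: The graph $C_\infty \oplus K_p \oplus C_\infty$ has vertex set $\mathbb{Z}$; its edges are every pair of distinct vertices in $\{-p+1,\ldots,0\}$, the edges $\{j,j+1\}$ for all $j \leq -p$, and the edges $\{j,j+1\}$ for all $j \geq 0$. $l^2$ is the real Hilbert space of square-summable real sequences indexed by $\mathbb{Z}$, with the standard inner product; $e_j$ is the indicator vector of $j$. The Laplacian acts by $(Lv)_i = \deg(i)\, v_i - \sum_{j \sim i} v_j$. A vector $v$ is symmetric if $v_{-p+1-n} = v_n$ for all integers $n \geq 0$, and antisymmetric if $v_{-p+1-n} = -v_n$ for all integers $n \geq 0$ (i.e. invariant, resp. anti-invariant, under the reflection $j \mapsto -p+1-j$ of the graph). *)

theory Defs
  imports "HOL-Analysis.Analysis"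
begin

definition adj :: "nat \<Rightarrow> int \<Rightarrow> int \<Rightarrow> bool" where
  "adj p i j \<longleftrightarrow>
     (i \<noteq> j \<and> -int p + 1 \<le> i \<and> i \<le> 0 \<and> -int p + 1 \<le> j \<and> j \<le> 0)
   \<or> (\<bar>i - j\<bar> = 1 \<and> min i j \<le> - int p)
   \<or> (\<bar>i - j\<bar> = 1 \<and> min i j \<ge> 0)"

definition deg :: "nat \<Rightarrow> int \<Rightarrow> nat" where
  "deg p i = card {j. adj p i j}"

definition laplacian :: "nat \<Rightarrow> (int \<Rightarrow> real) \<Rightarrow> (int \<Rightarrow> real)" where
  "laplacian p v = (\<lambda>i. real (deg p i) * v i - (\<Sum>j\<in>{j. adj p i j}. v j))"

definition l2 :: "(int \<Rightarrow> real) set" where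
  "l2 = {v. (\<lambda>i. (v i)\<^sup>2) summable_on UNIV}"

definition l2_inner :: "(int \<Rightarrow> real) \<Rightarrow> (int \<Rightarrow> real) \<Rightarrow> real" where
  "l2_inner u v = (\<Sum>\<^sub>\<infinity>i. u i * v i)"

definition E_K :: "nat \<Rightarrow> (int \<Rightarrow> real) set" where
  "E_K p = {v. (\<forall>i. i \<notin> {-int p + 2 .. -1} \<longrightarrow> v i = 0) \<and> (\<Sum>i\<in>{-int p + 2 .. -1}. v i) = 0}"

definition E_K_perp :: "nat \<Rightarrow> (int \<Rightarrow> real) set" where
  "E_K_perp p = {w \<in> l2. \<forall>v\<in>E_K p. l2_inner v w = 0}"

definition is_eigvec :: "nat \<Rightarrow> (int \<Rightarrow> real) \<Rightarrow> real \<Rightarrow> bool" where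
  "is_eigvec p v lam \<longleftrightarrow> v \<in> l2 \<and> v \<noteq> (\<lambda>_. 0) \<and> laplacian p v = (\<lambda>i. lam * v i)"

definition symmetric_vec :: "nat \<Rightarrow> (int \<Rightarrow> real) \<Rightarrow> bool" where
  "symmetric_vec p v \<longleftrightarrow> (\<forall>n\<ge>0. v (- int p + 1 - n) = v n)"

definition antisymmetric_vec :: "nat \<Rightarrow> (int \<Rightarrow> real) \<Rightarrow> bool" where
  "antisymmetric_vec p v \<longleftrightarrow> (\<forall>n\<ge>0. v (- int p + 1 - n) = - v n)"

definition sigma_plus :: "real \<Rightarrow> real" where
  "sigma_plus lam = ((2 - lam) + sqrt ((2 - lam)\<^sup>2 - 4)) / 2"

definition F_S :: "nat \<Rightarrow> real \<Rightarrow> real" where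
  "F_S p lam = (2 - lam) * sigma_plus lam - (real p - 1 - lam) * (2 - lam) + 2 * (real p - 2)"

definition F_A :: "nat \<Rightarrow> real \<Rightarrow> real" where
  "F_A p lam = sigma_plus lam - (real p + 1 - lam)"

end

theory Submission
  imports Defs
begin


lemma sigma_props:
  fixes lam :: real assumes "lam > 4"
  shows "-1 < sigma_plus lam" "sigma_plus lam < 0"
    "(sigma_plus lam)^2 + (lam - 2) * sigma_plus lam + 1 = 0"
proof -
  define D where "D = (2 - lam)^2 - 4"
  have "(lam-2)*(lam-2) > 2*2" using assms by (intro mult_strict_mono) auto
  hence D: "D > 0" "sqrt D ^2 = D" by (auto simp: D_def power2_eq_square algebra_simps)
  have s: "sigma_plus lam = ((2-lam) + sqrt D)/2" by (simp add: sigma_plus_def D_def)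
  have "sqrt D < lam - 2"
    using assms D_def by (intro real_less_lsqrt) (auto simp: power2_eq_square algebra_simps)
  moreover have "sqrt D > lam - 4"
  proof -
    have "(lam-4)^2 < D" using assms by (simp add: D_def power2_eq_square algebra_simps)
    thus ?thesis using assms by (smt (verit) real_less_rsqrt)
  qed
  ultimately show "-1 < sigma_plus lam" "sigma_plus lam < 0" using s by auto
  show "(sigma_plus lam)^2 + (lam - 2) * sigma_plus lam + 1 = 0"
    unfolding s using D(2) by (simp add: D_def power2_eq_square field_simps) 
qed

lemma sigma_unique:
  fixes lam t :: real assumes "lam > 4" "t > -1" "t^2 + (lam - 2) * t + 1 = 0"
  shows "sigma_plus lam = t"
proof -
  note S = sigma_props[OF assms(1)]
  have "(t - sigma_plus lam) * (t + sigma_plus lam + lam - 2) = 0"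
    using S(3) assms(3) by (simp add: algebra_simps power2_eq_square)
  moreover have "t + sigma_plus lam + lam - 2 > 0" using S assms by linarith
  ultimately show ?thesis by simp
qed

lemma sigma_mono:
  fixes x y :: real assumes "4 < x" "x < y"
  shows "sigma_plus x < sigma_plus y"
proof (rule ccontr)
  assume "\<not> ?thesis"
  hence le: "sigma_plus y \<le> sigma_plus x" by simp
  define a where "a = sigma_plus x"
  define b where "b = sigma_plus y"
  note Sx = sigma_props[OF assms(1), folded a_def]
  note Sy = sigma_props[of y, folded b_def]
  have Sy': "-1 < b" "b < 0" "b^2 + (y - 2) * b + 1 = 0" using Sy assms by auto
  have xa: "x*a = 2*a - a^2 - 1" using Sx(3) by (simp add: algebra_simps)
  have yb: "y*b = 2*b - b^2 - 1" using Sy'(3) by (simp add: algebra_simps)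
  have "(x - y) * (a * b) = (x*a)*b - (y*b)*a" by (simp add: algebra_simps)
  also have "\<dots> = (a - b) * (1 - a * b)" unfolding xa yb by (simp add: algebra_simps power2_eq_square)
  finally have id: "(x - y) * (a * b) = (a - b) * (1 - a * b)" .
  have ab1: "a * b > 0" using Sx Sy' by (simp add: mult_neg_neg)
  have "(-a) * (-b) < 1 * 1" using Sx Sy' by (intro mult_strict_mono) auto
  hence ab2: "a * b < 1" by simp
  have "(a - b) * (1 - a * b) \<ge> 0" using le ab2 unfolding a_def[symmetric] b_def[symmetric] by simp
  moreover have "(x - y) * (a * b) < 0" using assms ab1 by (simp add: mult_neg_pos)
  ultimately show False using id by linarith
qed

lemma FA_root:
  fixes lam :: real assumes "lam > 4" "F_A p lam = 0" "p \<ge> 5"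
  shows "lam = real p + 1 + 1 / (real p - 1)"
proof -
  have s: "sigma_plus lam = real p + 1 - lam" using assms(2) by (simp add: F_A_def)
  have "(real p + 1 - lam) * (real p - 1) + 1 = 0"
    using sigma_props(3)[OF assms(1)] unfolding s by (simp add: algebra_simps power2_eq_square)
  moreover have "real p - 1 > 0" using assms(3) by simp
  ultimately show ?thesis by (simp add: field_simps)
qed

lemma FA_root_exists:
  assumes "p \<ge> 5"
  shows "F_A p (real p + 1 + 1 / (real p - 1)) = 0"
proof -
  define t where "t = - 1 / (real p - 1)"
  have p1: "real p - 1 \<ge> 4" using assms by simp
  have "sigma_plus (real p + 1 + 1 / (real p - 1)) = t"
  proof (rule sigma_unique)
    have "1 / (real p - 1) > 0" using p1 by simp
    moreover have "real p \<ge> 5" using assms by simp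
    ultimately show "4 < real p + 1 + 1 / (real p - 1)" by linarith
    have "1 / (real p - 1) < 1" using p1 by simp
    thus "-1 < t" unfolding t_def by simp
    show "t\<^sup>2 + (real p + 1 + 1 / (real p - 1) - 2) * t + 1 = 0"
    proof -
      define q where "q = real p - 1"
      have q: "q \<noteq> 0" "real p = q + 1" using p1 by (auto simp: q_def)
      show ?thesis unfolding t_def q(2) using q(1) by (simp add: field_simps power2_eq_square)
    qed
  qed
  thus ?thesis unfolding F_A_def t_def by simp
qed

definition rS :: "nat \<Rightarrow> real \<Rightarrow> real" where
  "rS p lam = real p - 1 - lam + 2 * (real p - 2) / (lam - 2)"

lemma FS_factor: assumes "lam > 4" shows "F_S p lam = (2 - lam) * (sigma_plus lam - rS p lam)"
proof -
  have "lam - 2 \<noteq> 0" using assms by simp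
  thus ?thesis unfolding F_S_def rS_def by (simp add: field_simps)
qed

lemma FS_zero_iff: assumes "lam > 4" shows "F_S p lam = 0 \<longleftrightarrow> sigma_plus lam = rS p lam"
  using FS_factor[OF assms] assms by simp

lemma rS_low: assumes "4 < lam" "lam \<le> real p" shows "rS p lam \<ge> 1"
proof -
  have "2 * (real p - 2) / (lam - 2) \<ge> 2" using assms by (simp add: field_simps)
  thus ?thesis unfolding rS_def using assms by linarith
qed

lemma rS_high: assumes "p \<ge> 5" "lam \<ge> real p + 2" shows "rS p lam < -1"
proof -
  have "2 * (real p - 2) / (lam - 2) < 2" using assms by (simp add: field_simps)
  thus ?thesis unfolding rS_def using assms by linarith
qed

lemma rS_mono: assumes "4 < x" "x < y" "p \<ge> 5" shows "rS p y < rS p x"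
proof -
  have "2 * (real p - 2) / (y - 2) \<le> 2 * (real p - 2) / (x - 2)"
    using assms by (intro divide_left_mono) auto
  thus ?thesis unfolding rS_def using assms by linarith
qed

lemma FS_none: assumes "p \<ge> 5" "lam > 4" "lam \<le> real p \<or> lam \<ge> real p + 2"
  shows "F_S p lam \<noteq> 0"
  using assms FS_zero_iff[OF assms(2)] rS_low[of lam p] rS_high[of p lam] sigma_props[OF assms(2)]
  by force

lemma FS_unique: assumes "p \<ge> 5" "x > 4" "y > 4" "F_S p x = 0" "F_S p y = 0" shows "x = y"
proof (rule ccontr)
  assume ne: "x \<noteq> y"
  have ex: "sigma_plus x = rS p x" "sigma_plus y = rS p y" using FS_zero_iff assms by auto
  show False
  proof (cases "x < y")
    case True
    thus False using sigma_mono[OF assms(2) True] rS_mono[OF assms(2) True assms(1)] ex by simp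
  next
    case False
    hence yx: "y < x" using ne by simp
    thus False using sigma_mono[OF assms(3) yx] rS_mono[OF assms(3) yx assms(1)] ex by simp
  qed
qed

lemma FS_exists: assumes "p \<ge> 5" shows "\<exists>lam. lam \<in> {real p<..<real p + 2} \<and> F_S p lam = 0"
proof -
  define h where "h = (\<lambda>lam. sigma_plus lam - rS p lam)"
  have p5: "real p \<ge> 5" using assms by simp
  have cont: "continuous_on {real p .. real p + 2} h"
    unfolding h_def sigma_plus_def rS_def
    using p5 by (intro continuous_intros) auto
  have "h (real p) \<le> 0" using rS_low[of "real p" p] sigma_props[of "real p"] p5 unfolding h_def by simp
  moreover have "0 \<le> h (real p + 2)"
    using rS_high[OF assms, of "real p + 2"] sigma_props[of "real p + 2"] p5 unfolding h_def by simp
  ultimately obtain x where x: "real p \<le> x" "x \<le> real p + 2" "h x = 0"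
    using IVT'[of h "real p" 0 "real p + 2"] cont by auto
  have x4: "x > 4" using x p5 by simp
  have F: "F_S p x = 0" using x(3) FS_zero_iff[OF x4] unfolding h_def by simp
  hence "x \<noteq> real p" "x \<noteq> real p + 2" using FS_none[OF assms x4] by auto
  hence "x \<in> {real p<..<real p + 2}" using x by auto
  with F show ?thesis by blast
qed



lemma nb_right: "i \<ge> 1 \<Longrightarrow> {j. adj p i j} = {i-1, i+1}"
  unfolding adj_def by auto

lemma nb_left: "i \<le> - int p \<Longrightarrow> {j. adj p i j} = {i-1, i+1}"
  unfolding adj_def by auto

lemma nb_0: "p \<ge> 2 \<Longrightarrow> {j. adj p 0 j} = {-int p+1 .. -1} \<union> {1}"
  unfolding adj_def by auto

lemma nb_int: "-int p + 2 \<le> i \<Longrightarrow> i \<le> -1 \<Longrightarrow> {j. adj p i j} = {-int p+1 .. 0} - {i}"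
  unfolding adj_def by auto

lemma nb_lend: "p \<ge> 2 \<Longrightarrow> {j. adj p (-int p + 1) j} = {-int p+2 .. 0} \<union> {-int p}"
  unfolding adj_def by auto

lemma nb_finite: "finite {j. adj p i j}"
proof -
  have "{j. adj p i j} \<subseteq> {i-1, i+1} \<union> {-int p+1 .. 0}" unfolding adj_def by auto
  thus ?thesis by (rule finite_subset) auto
qed

lemma lap_sum: "laplacian p v i = (\<Sum>j\<in>{j. adj p i j}. v i - v j)"
  unfolding laplacian_def deg_def using nb_finite[of p i]
  by (simp add: sum_subtractf)

definition tvec :: "nat \<Rightarrow> real \<Rightarrow> real \<Rightarrow> real \<Rightarrow> real \<Rightarrow> int \<Rightarrow> real" where
  "tvec p s c d m i = (if i \<ge> 0 then c * s ^ nat i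
     else if i \<le> -int p + 1 then d * s ^ nat (-int p + 1 - i) else m)"


lemma sum_mid_const: assumes "p \<ge> 2" "\<And>j. j \<in> {-int p+2 .. -1} \<Longrightarrow> f j = (x::real)"
  shows "(\<Sum>j\<in>{-int p+2 .. -1}. f j) = (real p - 2) * x"
proof -
  have "(\<Sum>j\<in>{-int p+2 .. -1}. f j) = (\<Sum>j\<in>{-int p+2 .. -1}. x)" using assms(2) by simp
  also have "\<dots> = real (nat (int p - 2)) * x" by simp
  moreover have "real (nat (int p - 2)) = real p - 2" using assms(1) by simp
  ultimately show ?thesis by simp
qed

lemma split1: "p \<ge> 2 \<Longrightarrow> {-int p+1 .. -1} = insert (-int p+1) {-int p+2 .. -1}" by auto
lemma split2: "p \<ge> 2 \<Longrightarrow> {-int p+2 .. 0} = insert 0 {-int p+2 .. -1}" by auto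
lemma split3: "p \<ge> 2 \<Longrightarrow> {-int p+1 .. 0} = insert (-int p+1) (insert 0 {-int p+2 .. -1})" by auto

context
  fixes p :: nat and lam s c d m :: real
  assumes p5: "p \<ge> 5" and lam: "lam > 4" and s: "s = sigma_plus lam"
begin

lemma sq: "s^2 + (lam - 2) * s + 1 = 0" using sigma_props[OF lam] s by simp

lemma sq2: "2 * s - 1 - s^2 = lam * s" using sq by (simp add: algebra_simps)

lemma lap_vec_right: assumes "i \<ge> 1"
  shows "laplacian p (tvec p s c d m) i = lam * tvec p s c d m i"
proof -
  obtain n where n: "i = int n + 1" using assms by (metis add.commute zle_iff_zadd)
  have "laplacian p (tvec p s c d m) i = 2 * tvec p s c d m i - tvec p s c d m (i-1) - tvec p s c d m (i+1)"
    using nb_right[OF assms, of p] by (simp add: lap_sum)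
  also have "\<dots> = c * s^n * (2 * s - 1 - s^2)"
    unfolding tvec_def n by (simp add: nat_add_distrib algebra_simps power2_eq_square)
  also have "\<dots> = c * s^n * (lam * s)" using sq2 by simp
  also have "\<dots> = lam * (c * s^(n+1))" by simp
  also have "\<dots> = lam * tvec p s c d m i" unfolding tvec_def n by (simp add: nat_add_distrib)
  finally show ?thesis .
qed

lemma lap_vec_left: assumes "i \<le> - int p"
  shows "laplacian p (tvec p s c d m) i = lam * tvec p s c d m i"
proof -
  obtain n where n: "i = - int p - int n" using assms by (metis add.commute diff_add_cancel diff_minus_eq_add le_iff_add uminus_add_conv_diff zle_iff_zadd) 
  have e1: "nat (-int p + 1 - i) = n + 1" "nat (-int p + 1 - (i - 1)) = n + 2" "nat (-int p + 1 - (i + 1)) = n"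
    unfolding n by auto
  have "laplacian p (tvec p s c d m) i = 2 * tvec p s c d m i - tvec p s c d m (i-1) - tvec p s c d m (i+1)"
    using nb_left[OF assms] by (simp add: lap_sum)
  also have "\<dots> = d * s^n * (2 * s - 1 - s^2)"
    unfolding tvec_def n using p5 by (simp add: algebra_simps power2_eq_square nat_add_distrib)
  also have "\<dots> = d * s^n * (lam * s)" using sq2 by simp
  also have "\<dots> = lam * (d * s^(n+1))" by simp
  also have "\<dots> = lam * tvec p s c d m i" unfolding tvec_def n using p5 by (simp add: nat_add_distrib)
  finally show ?thesis .
qed

lemma lap_vec_0:
  "laplacian p (tvec p s c d m) 0 = (real p - 2) * (c - m) + (c - d) + (c - c * s)"
proof -
  have p2: "p \<ge> 2" using p5 by simp
  have A: "{-int p+1 .. -1} \<union> {1} = insert 1 (insert (-int p+1) {-int p+2 .. -1})" using p2 by auto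
  have "laplacian p (tvec p s c d m) 0 = (\<Sum>j\<in>insert 1 (insert (-int p+1) {-int p+2 .. -1}). tvec p s c d m 0 - tvec p s c d m j)"
    by (simp only: lap_sum nb_0[OF p2] A)
  also have "\<dots> = (c - c * s) + ((c - d) + (\<Sum>j\<in>{-int p+2 .. -1}. tvec p s c d m 0 - tvec p s c d m j))"
    using p5 by (simp add: tvec_def)
  also have "(\<Sum>j\<in>{-int p+2 .. -1}. tvec p s c d m 0 - tvec p s c d m j) = (real p - 2) * (c - m)"
    using p2 by (intro sum_mid_const) (auto simp: tvec_def)
  finally show ?thesis by simp
qed

lemma lap_vec_lend:
  "laplacian p (tvec p s c d m) (-int p + 1) = (real p - 2) * (d - m) + (d - c) + (d - d * s)"
proof -
  have p2: "p \<ge> 2" using p5 by simp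
  have A: "{-int p+2 .. 0} \<union> {-int p} = insert (-int p) (insert 0 {-int p+2 .. -1})" using p2 by auto
  have "laplacian p (tvec p s c d m) (-int p + 1) = (\<Sum>j\<in>insert (-int p) (insert 0 {-int p+2 .. -1}). tvec p s c d m (-int p + 1) - tvec p s c d m j)"
    by (simp only: lap_sum nb_lend[OF p2] A)
  also have "\<dots> = (d - d * s) + ((d - c) + (\<Sum>j\<in>{-int p+2 .. -1}. tvec p s c d m (-int p + 1) - tvec p s c d m j))"
    using p5 by (simp add: tvec_def)
  also have "(\<Sum>j\<in>{-int p+2 .. -1}. tvec p s c d m (-int p + 1) - tvec p s c d m j) = (real p - 2) * (d - m)"
    using p2 by (intro sum_mid_const) (auto simp: tvec_def)
  finally show ?thesis by simp
qed

lemma lap_vec_int: assumes "-int p + 2 \<le> i" "i \<le> -1"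
  shows "laplacian p (tvec p s c d m) i = 2 * m - c - d"
proof -
  have p2: "p \<ge> 2" using p5 by simp
  have "laplacian p (tvec p s c d m) i = (\<Sum>j\<in>insert (-int p+1) (insert 0 {-int p+2 .. -1}) - {i}. tvec p s c d m i - tvec p s c d m j)"
    unfolding lap_sum nb_int[OF assms] split3[OF p2] ..
  also have "\<dots> = (\<Sum>j\<in>insert (-int p+1) (insert 0 {-int p+2 .. -1}). tvec p s c d m i - tvec p s c d m j)"
    using assms by (subst sum_diff1) auto
  also have "\<dots> = (m - d) + ((m - c) + (\<Sum>j\<in>{-int p+2 .. -1}. tvec p s c d m i - tvec p s c d m j))"
    using p5 assms by (simp add: tvec_def)
  also have "(\<Sum>j\<in>{-int p+2 .. -1}. tvec p s c d m i - tvec p s c d m j) = (real p - 2) * 0"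
    using p2 assms by (intro sum_mid_const) (auto simp: tvec_def)
  finally show ?thesis by simp
qed

end

lemma geo_summable: fixes s c :: real assumes "\<bar>s\<bar> < 1"
  shows "(\<lambda>n::nat. (c * s^n)^2) summable_on UNIV"
proof -
  have "\<bar>s^2\<bar> < 1" using assms by (simp add: abs_square_less_1)
  hence "summable (\<lambda>n. c^2 * (s^2)^n)" by (intro summable_mult summable_geometric) simp
  hence "summable (\<lambda>n::nat. (c * s^n)^2)" by (simp add: power_mult_distrib power_mult[symmetric] mult.commute)
  thus ?thesis by (subst summable_on_UNIV_nonneg_real_iff) auto
qed

lemma vec_l2: fixes s :: real assumes "\<bar>s\<bar> < 1" "p \<ge> 2" shows "tvec p s c d m \<in> l2"
proof -
  let ?g = "\<lambda>i. (tvec p s c d m i)^2"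
  have U: "UNIV = (int ` UNIV \<union> (\<lambda>n. -int p + 1 - int n) ` UNIV) \<union> {-int p+2 .. -1}"
  proof (rule set_eqI, rule iffI)
    fix x :: int
    show "x \<in> (int ` UNIV \<union> (\<lambda>n. -int p + 1 - int n) ` UNIV) \<union> {-int p+2 .. -1}"
    proof (cases "x \<ge> 0")
      case True
      hence "x = int (nat x)" by simp
      thus ?thesis by (metis UnI1 rangeI)
    next
      case False
      show ?thesis
      proof (cases "x \<le> -int p + 1")
        case True
        hence "x = -int p + 1 - int (nat (-int p + 1 - x))" by simp
        hence "x \<in> (\<lambda>n. -int p + 1 - int n) ` UNIV" by (metis rangeI)
        thus ?thesis by blast
      next
        case False
        thus ?thesis using \<open>\<not> x \<ge> 0\<close> by auto
      qed
    qed
  qed simp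
  have A: "?g summable_on int ` UNIV"
    by (subst summable_on_reindex) (auto simp: o_def tvec_def geo_summable[OF assms(1)])
  have B: "?g summable_on (\<lambda>n. -int p + 1 - int n) ` UNIV"
  proof (subst summable_on_reindex)
    show "inj_on (\<lambda>n. - int p + 1 - int n) UNIV" by (auto simp: inj_on_def)
    have "(?g \<circ> (\<lambda>n. - int p + 1 - int n)) = (\<lambda>n. (d * s^n)^2)" using assms(2) by (auto simp: o_def tvec_def)
    thus "(?g \<circ> (\<lambda>n. - int p + 1 - int n)) summable_on UNIV" using geo_summable[OF assms(1)] by simp
  qed
  have "?g summable_on UNIV"
    by (subst U, intro summable_on_union A B summable_on_finite) auto
  thus ?thesis unfolding l2_def by simp
qed

lemma inner_finite: assumes "finite F" "\<And>i. i \<notin> F \<Longrightarrow> u i = 0"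
  shows "l2_inner u w = (\<Sum>i\<in>F. u i * w i)"
proof -
  have "l2_inner u w = infsum (\<lambda>i. u i * w i) F"
    unfolding l2_inner_def by (rule infsum_cong_neutral) (use assms in auto)
  thus ?thesis using assms(1) by simp
qed

lemma perp_const: assumes "w \<in> E_K_perp p" "p \<ge> 3" "-int p + 2 \<le> i" "i \<le> -1"
  shows "w i = w (-1)"
proof (cases "i = -1")
  case False
  define u where "u = (\<lambda>k::int. (if k = i then 1 else 0) - (if k = -1 then 1 else (0::real)))"
  have uE: "u \<in> E_K p"
  proof -
    have "(\<Sum>k\<in>{-int p + 2 .. -1}. u k) = 1 - 1"
      unfolding u_def using assms by (simp add: sum_subtractf)
    moreover have "\<forall>k. k \<notin> {-int p + 2 .. -1} \<longrightarrow> u k = 0" unfolding u_def using assms by auto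
    ultimately show ?thesis unfolding E_K_def by simp
  qed
  hence "l2_inner u w = 0" using assms(1) unfolding E_K_perp_def by auto
  moreover have "l2_inner u w = (\<Sum>k\<in>{i, -1}. u k * w k)"
    by (rule inner_finite) (auto simp: u_def)
  moreover have "(\<Sum>k\<in>{i, -1}. u k * w k) = w i - w (-1)" using False by (simp add: u_def)
  ultimately show ?thesis by simp
qed simp

lemma vec_perp: fixes s :: real assumes "\<bar>s\<bar> < 1" "p \<ge> 2" shows "tvec p s c d m \<in> E_K_perp p"
proof -
  have "l2_inner u (tvec p s c d m) = 0" if u: "u \<in> E_K p" for u
  proof -
    have "l2_inner u (tvec p s c d m) = (\<Sum>k\<in>{-int p + 2 .. -1}. u k * tvec p s c d m k)"
      by (rule inner_finite) (use u in \<open>auto simp: E_K_def\<close>)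
    also have "\<dots> = (\<Sum>k\<in>{-int p + 2 .. -1}. u k * m)"
      by (rule sum.cong) (auto simp: tvec_def)
    also have "\<dots> = (\<Sum>k\<in>{-int p + 2 .. -1}. u k) * m" by (simp add: sum_distrib_right)
    also have "\<dots> = 0" using u by (simp add: E_K_def)
    finally show ?thesis .
  qed
  thus ?thesis unfolding E_K_perp_def using vec_l2[OF assms] by auto
qed


lemma l2_bounded: assumes "v \<in> l2" shows "\<exists>B. \<forall>i. \<bar>v i\<bar> \<le> B"
proof -
  let ?g = "\<lambda>i. (v i)^2"
  have sm: "?g summable_on UNIV" using assms by (simp add: l2_def)
  have "?g i \<le> infsum ?g UNIV" for i
  proof -
    have "infsum ?g {i} \<le> infsum ?g UNIV"
      by (rule infsum_mono_neutral) (use sm in auto)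
    thus ?thesis by simp
  qed
  hence "\<bar>v i\<bar> \<le> sqrt (infsum ?g UNIV)" for i
    using real_le_rsqrt[of "\<bar>v i\<bar>"] by (simp add: power2_abs)
  thus ?thesis by blast
qed

lemma tail_geom:
  fixes x :: "nat \<Rightarrow> real" and lam B :: real
  assumes lam: "lam > 4" and bd: "\<And>n. \<bar>x n\<bar> \<le> B"
    and rec: "\<And>n. x (n+2) + (lam - 2) * x (n+1) + x n = 0"
  shows "x n = sigma_plus lam ^ n * x 0"
proof -
  define s where "s = sigma_plus lam"
  note S = sigma_props[OF lam, folded s_def]
  define t where "t = 1 / s"
  have st: "s * t = 1" using S unfolding t_def by simp
  have t_eq: "t = -(lam - 2) - s"
  proof -
    have "s * (t + (lam - 2) + s) = 0" using st S(3) by (simp add: algebra_simps power2_eq_square)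
    thus ?thesis using S by simp
  qed
  have "t < -1" using S unfolding t_def by (simp add: divide_less_eq)
  hence t1: "\<bar>t\<bar> > 1" by simp
  define w where "w n = x (n+1) - s * x n" for n
  have wrec: "w (n+1) = t * w n" for n
  proof -
    have "w (n+1) = x (n+2) - s * x (n+1)" by (simp add: w_def)
    also have "\<dots> = -(lam - 2) * x (n+1) - x n - s * x (n+1)"
    proof -
      have "x (n+2) = -((lam - 2) * x (n+1)) - x n" using rec[of n] by linarith
      thus ?thesis by (simp add: algebra_simps)
    qed
    also have "\<dots> = (-(lam - 2) - s) * x (n+1) - 1 * x n" by (simp add: algebra_simps)
    also have "\<dots> = t * x (n+1) - (s * t) * x n" using t_eq st by simp
    also have "\<dots> = t * w n" by (simp add: w_def algebra_simps)
    finally show ?thesis .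
  qed
  have wn: "w n = t^n * w 0" for n
  proof (induction n)
    case (Suc n) thus ?case using wrec[of n] by simp
  qed simp
  have w0: "w 0 = 0"
  proof (rule ccontr)
    assume ne: "w 0 \<noteq> 0"
    have wb: "\<bar>w n\<bar> \<le> 2 * B" for n
    proof -
      have "\<bar>w n\<bar> \<le> \<bar>x (n+1)\<bar> + \<bar>s * x n\<bar>" unfolding w_def by (rule abs_triangle_ineq4)
      also have "\<dots> = \<bar>x (n+1)\<bar> + \<bar>s\<bar> * \<bar>x n\<bar>" by (simp add: abs_mult)
      also have "\<dots> \<le> B + 1 * B" using bd[of n] bd[of "n+1"] S(1,2)
        by (intro add_mono mult_mono) auto
      finally show ?thesis by simp
    qed
    obtain n where n: "2 * B / \<bar>w 0\<bar> < \<bar>t\<bar>^n" using real_arch_pow[OF t1] by blast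
    have "2 * B < \<bar>t\<bar>^n * \<bar>w 0\<bar>" using n ne by (simp add: pos_divide_less_eq)
    also have "\<dots> = \<bar>w n\<bar>" unfolding wn[of n] by (simp add: abs_mult power_abs)
    finally show False using wb[of n] by simp
  qed
  have "x (n+1) = s * x n" for n using wn[of n] w0 by (simp add: w_def)
  hence "x n = s^n * x 0"
  proof (induction n)
    case (Suc n) thus ?case by (simp add: mult.assoc)
  qed simp
  thus ?thesis by (simp add: s_def)
qed



lemma no_common_root: assumes "lam > 4" "F_A p lam = 0" "F_S p lam = 0" shows False
proof -
  have s: "sigma_plus lam = real p + 1 - lam" using assms(2) by (simp add: F_A_def)
  have "F_S p lam = 2 * (real p - lam)" unfolding F_S_def s by (simp add: algebra_simps)
  hence "lam = real p" using assms(3) by simp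
  thus False using s sigma_props[OF assms(1)] by simp
qed

lemma lap_right_gen: "i \<ge> 1 \<Longrightarrow> laplacian p v i = 2 * v i - v (i-1) - v (i+1)"
  using nb_right[of i p] by (simp add: lap_sum)

lemma lap_left_gen: "i \<le> - int p \<Longrightarrow> laplacian p v i = 2 * v i - v (i-1) - v (i+1)"
  using nb_left[of i p] by (simp add: lap_sum)

context
  fixes p :: nat and lam s :: real
  assumes p5: "p \<ge> 5" and lam: "lam > 4" and s: "s = sigma_plus lam"
begin

lemma eig_form: assumes "is_eigvec p v lam" "v \<in> E_K_perp p"
  shows "v = tvec p s (v 0) (v (-int p + 1)) (v (-1))"
proof -
  have l2: "v \<in> l2" and eq: "\<And>i. laplacian p v i = lam * v i" using assms(1) by (auto simp: is_eigvec_def)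
  obtain B where B: "\<And>i. \<bar>v i\<bar> \<le> B" using l2_bounded[OF l2] by blast
  have R: "v (int n) = s^n * v 0" for n
  proof -
    have "(\<lambda>n. v (int n)) n = sigma_plus lam ^ n * (\<lambda>n. v (int n)) 0"
    proof (rule tail_geom[OF lam])
      show "\<bar>v (int n)\<bar> \<le> B" for n using B .
      show "v (int (n + 2)) + (lam - 2) * v (int (n + 1)) + v (int n) = 0" for n
      proof -
        have "laplacian p v (int n + 1) = 2 * v (int n + 1) - v (int n) - v (int n + 2)"
          using lap_right_gen[of "int n + 1" p v] by (simp add: add.assoc)
        thus ?thesis using eq[of "int n + 1"] by (simp add: algebra_simps)
      qed
    qed
    thus ?thesis by (simp add: s)
  qed
  have L: "v (-int p + 1 - int n) = s^n * v (-int p + 1)" for n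
  proof -
    have "(\<lambda>n. v (-int p + 1 - int n)) n = sigma_plus lam ^ n * (\<lambda>n. v (-int p + 1 - int n)) 0"
    proof (rule tail_geom[OF lam])
      show "\<bar>v (-int p + 1 - int n)\<bar> \<le> B" for n using B .
      show "v (-int p + 1 - int (n + 2)) + (lam - 2) * v (-int p + 1 - int (n + 1)) + v (-int p + 1 - int n) = 0" for n
      proof -
        have e: "-int p + 1 - int (n + 2) = (-int p - int n) - 1" "-int p + 1 - int (n + 1) = -int p - int n"
          "-int p + 1 - int n = (-int p - int n) + 1" by auto
        have "laplacian p v (-int p - int n) = 2 * v (-int p - int n) - v (-int p - int n - 1) - v (-int p - int n + 1)"
          by (rule lap_left_gen) simp
        thus ?thesis unfolding e using eq[of "-int p - int n"] by (simp add: algebra_simps)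
      qed
    qed
    thus ?thesis by (simp add: s)
  qed
  show ?thesis
  proof
    fix i :: int
    show "v i = tvec p s (v 0) (v (-int p + 1)) (v (-1)) i"
    proof (cases "i \<ge> 0")
      case True
      thus ?thesis using R[of "nat i"] by (simp add: tvec_def)
    next
      case False
      show ?thesis
      proof (cases "i \<le> -int p + 1")
        case True
        hence "i = -int p + 1 - int (nat (-int p + 1 - i))" by simp
        hence "v i = s ^ nat (-int p + 1 - i) * v (-int p + 1)" using L[of "nat (-int p + 1 - i)"] by metis
        thus ?thesis using True False by (simp add: tvec_def)
      next
        case False
        hence "v i = v (-1)" using perp_const[OF assms(2), of i] p5 \<open>\<not> i \<ge> 0\<close> by simp
        thus ?thesis using False \<open>\<not> i \<ge> 0\<close> by (simp add: tvec_def)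
      qed
    qed
  qed
qed

end



definition resA :: "nat \<Rightarrow> real \<Rightarrow> real \<Rightarrow> real \<Rightarrow> real \<Rightarrow> real \<Rightarrow> real" where
  "resA p lam s c d m = (real p - 2) * (c - m) + (c - d) + (c - c * s) - lam * c"
definition resM :: "real \<Rightarrow> real \<Rightarrow> real \<Rightarrow> real \<Rightarrow> real" where
  "resM lam c d m = 2 * m - c - d - lam * m"

lemma FS_ident: "F_S p lam * (c + d) = -(2 - lam) * (resA p lam (sigma_plus lam) c d m + resA p lam (sigma_plus lam) d c m)
   - 2 * (real p - 2) * resM lam c d m"
  unfolding F_S_def resA_def resM_def by algebra

lemma FA_ident: "F_A p lam * (c - d) = resA p lam (sigma_plus lam) d c m - resA p lam (sigma_plus lam) c d m"
  unfolding F_A_def resA_def by algebra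

lemma vec_sym: "p \<ge> 2 \<Longrightarrow> symmetric_vec p (tvec p s c c m)"
  unfolding symmetric_vec_def tvec_def by auto

lemma vec_antisym: "p \<ge> 2 \<Longrightarrow> antisymmetric_vec p (tvec p s c (-c) m)"
  unfolding antisymmetric_vec_def tvec_def by auto

lemma vec_zero: "tvec p s 0 0 0 = (\<lambda>_. 0)"
  unfolding tvec_def by auto

context
  fixes p :: nat and lam s :: real
  assumes p5: "p \<ge> 5" and lam: "lam > 4" and s: "s = sigma_plus lam"
begin

lemma vec_eig: assumes "resA p lam s c d m = 0" "resA p lam s d c m = 0" "resM lam c d m = 0"
  shows "laplacian p (tvec p s c d m) = (\<lambda>i. lam * tvec p s c d m i)"
proof
  fix i :: int
  show "laplacian p (tvec p s c d m) i = lam * tvec p s c d m i"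
  proof -
    consider "i \<ge> 1" | "i = 0" | "-int p + 2 \<le> i \<and> i \<le> -1" | "i = -int p + 1" | "i \<le> -int p" by linarith
    thus ?thesis
    proof cases
      case 1 thus ?thesis by (rule lap_vec_right[OF p5 lam s])
    next
      case 2 thus ?thesis using lap_vec_0[OF p5 lam s, of c d m] assms(1) by (simp add: resA_def tvec_def)
    next
      case 3 thus ?thesis using lap_vec_int[OF p5 lam s, of i c d m] assms(3) by (simp add: resM_def tvec_def)
    next
      case 4 thus ?thesis using lap_vec_lend[OF p5 lam s, of c d m] assms(2) p5 by (simp add: resA_def tvec_def)
    next
      case 5 thus ?thesis by (rule lap_vec_left[OF p5 lam s])
    qed
  qed
qed

lemma eig_eqs: assumes "laplacian p (tvec p s c d m) = (\<lambda>i. lam * tvec p s c d m i)"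
  shows "resA p lam s c d m = 0" "resA p lam s d c m = 0" "resM lam c d m = 0"
proof -
  have "laplacian p (tvec p s c d m) 0 = lam * tvec p s c d m 0" using assms by metis
  thus "resA p lam s c d m = 0" using lap_vec_0[OF p5 lam s, of c d m] by (simp add: resA_def tvec_def)
  have "laplacian p (tvec p s c d m) (-int p + 1) = lam * tvec p s c d m (-int p + 1)" using assms by metis
  thus "resA p lam s d c m = 0" using lap_vec_lend[OF p5 lam s, of c d m] p5 by (simp add: resA_def tvec_def)
  have "laplacian p (tvec p s c d m) (-1) = lam * tvec p s c d m (-1)" using assms by metis
  thus "resM lam c d m = 0" using lap_vec_int[OF p5 lam s, of "-1" c d m] p5 by (simp add: resM_def tvec_def)
qed

end



lemma vec_nonzero: "tvec p s 1 d m \<noteq> (\<lambda>_. 0)"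
proof
  assume "tvec p s 1 d m = (\<lambda>_. 0)"
  hence "tvec p s 1 d m 0 = 0" by metis
  thus False by (simp add: tvec_def)
qed

lemma eig_setup:
  assumes p5: "p \<ge> 5" and lam: "lam > 4" and H: "is_eigvec p v lam" "v \<in> E_K_perp p"
  shows "v = tvec p (sigma_plus lam) (v 0) (v (-int p + 1)) (v (-1))
    \<and> resA p lam (sigma_plus lam) (v 0) (v (-int p + 1)) (v (-1)) = 0
    \<and> resA p lam (sigma_plus lam) (v (-int p + 1)) (v 0) (v (-1)) = 0
    \<and> resM lam (v 0) (v (-int p + 1)) (v (-1)) = 0"
proof -
  define c d m where "c = v 0" and "d = v (-int p + 1)" and "m = v (-1)"
  have vf: "v = tvec p (sigma_plus lam) c d m" using eig_form[OF p5 lam refl H] by (simp add: c_def d_def m_def)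
  have "laplacian p v = (\<lambda>i. lam * v i)" using H by (simp add: is_eigvec_def)
  hence lap: "laplacian p (tvec p (sigma_plus lam) c d m) = (\<lambda>i. lam * tvec p (sigma_plus lam) c d m i)"
    using vf by simp
  note E = eig_eqs[OF p5 lam refl lap]
  show ?thesis using vf E by (simp add: c_def d_def m_def)
qed

lemma zero_case: assumes "lam > 4" "resM lam 0 0 m = 0" shows "m = 0"
  using assms by (simp add: resM_def algebra_simps)

theorem proposition11:
  fixes p :: nat
  assumes "p \<ge> 5"
  shows "(\<forall>lam>4. \<forall>v. is_eigvec p v lam \<and> v \<in> E_K_perp p \<longrightarrow>
            symmetric_vec p v \<or> antisymmetric_vec p v)
       \<and> (\<forall>lam>4. (\<exists>v. is_eigvec p v lam \<and> v \<in> E_K_perp p \<and> symmetric_vec p v)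
                  \<longleftrightarrow> F_S p lam = 0)
       \<and> (\<forall>lam>4. (\<exists>v. is_eigvec p v lam \<and> v \<in> E_K_perp p \<and> antisymmetric_vec p v)
                  \<longleftrightarrow> F_A p lam = 0)
       \<and> (\<exists>!lam. lam \<in> {real p<..<real p + 2} \<and> F_A p lam = 0)
       \<and> (\<forall>lam. lam > 4 \<and> (lam \<le> real p \<or> lam \<ge> real p + 2) \<longrightarrow> F_A p lam \<noteq> 0)
       \<and> (\<exists>!lam. lam \<in> {real p<..<real p + 2} \<and> F_S p lam = 0)
       \<and> (\<forall>lam. lam > 4 \<and> (lam \<le> real p \<or> lam \<ge> real p + 2) \<longrightarrow> F_S p lam \<noteq> 0)"
proof -
  have p5: "p \<ge> 5" using assms .
  have p2: "p \<ge> 2" using p5 by simp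
  have P1: "\<forall>lam>4. \<forall>v. is_eigvec p v lam \<and> v \<in> E_K_perp p \<longrightarrow>
            symmetric_vec p v \<or> antisymmetric_vec p v"
  proof (intro allI impI)
    fix lam v assume lam: "lam > 4" and H: "is_eigvec p v lam \<and> v \<in> E_K_perp p"
    define c d m where "c = v 0" and "d = v (-int p + 1)" and "m = v (-1)"
    note S = eig_setup[OF p5 lam conjunct1[OF H] conjunct2[OF H], folded c_def d_def m_def]
    have vf: "v = tvec p (sigma_plus lam) c d m" using S by blast
    show "symmetric_vec p v \<or> antisymmetric_vec p v"
    proof (cases "c = d")
      case True then show ?thesis using vf vec_sym[OF p2, of "sigma_plus lam" c m] by simp
    next
      case False
      show ?thesis
      proof (cases "d = -c")
        case True then show ?thesis using vf vec_antisym[OF p2, of "sigma_plus lam" c m] by simp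
      next
        case False2: False
        have "F_A p lam * (c - d) = 0" using FA_ident[of p lam c d m] S by simp
        hence "F_A p lam = 0" using \<open>c \<noteq> d\<close> by simp
        moreover have "F_S p lam * (c + d) = 0" using FS_ident[of p lam c d m] S by simp
        hence "F_S p lam = 0" using False2 by (auto simp: add_eq_0_iff)
        ultimately show ?thesis using no_common_root[OF lam] by blast
      qed
    qed
  qed
  have P2: "\<forall>lam>4. (\<exists>v. is_eigvec p v lam \<and> v \<in> E_K_perp p \<and> symmetric_vec p v)
                  \<longleftrightarrow> F_S p lam = 0"
  proof (intro allI impI iffI)
    fix lam :: real assume lam: "lam > 4"
    {
      assume "\<exists>v. is_eigvec p v lam \<and> v \<in> E_K_perp p \<and> symmetric_vec p v"
      then obtain v where H: "is_eigvec p v lam" "v \<in> E_K_perp p" "symmetric_vec p v" by blast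
      define c d m where "c = v 0" and "d = v (-int p + 1)" and "m = v (-1)"
      note S = eig_setup[OF p5 lam H(1,2), folded c_def d_def m_def]
      have vf: "v = tvec p (sigma_plus lam) c d m" using S by blast
      have cd: "d = c" using H(3) unfolding symmetric_vec_def c_def d_def by (metis diff_zero order_refl of_nat_0)
      show "F_S p lam = 0"
      proof (rule ccontr)
        assume ne: "F_S p lam \<noteq> 0"
        have "F_S p lam * (c + d) = 0" using FS_ident[of p lam c d m] S by simp
        hence c0: "c = 0" "d = 0" using ne cd by auto
        hence "m = 0" using zero_case[OF lam] S by simp
        hence "v = (\<lambda>_. 0)" using vf c0 vec_zero by simp
        thus False using H(1) by (simp add: is_eigvec_def)
      qed
    }
    {
      assume FS: "F_S p lam = 0"
      define s where "s = sigma_plus lam"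
      define m where "m = 2 / (2 - lam)"
      have sa: "\<bar>s\<bar> < 1" using sigma_props[OF lam] s_def by auto
      have rM: "resM lam 1 1 m = 0" using lam unfolding resM_def m_def by (simp add: field_simps)
      have "0 = -(2 - lam) * (resA p lam s 1 1 m + resA p lam s 1 1 m)"
        using FS_ident[of p lam 1 1 m] FS rM s_def by simp
      hence rA: "resA p lam s 1 1 m = 0" using lam by simp
      have "is_eigvec p (tvec p s 1 1 m) lam"
        unfolding is_eigvec_def using vec_l2[OF sa p2] vec_nonzero vec_eig[OF p5 lam s_def rA rA rM] by simp
      moreover have "tvec p s 1 1 m \<in> E_K_perp p" by (rule vec_perp[OF sa p2])
      moreover have "symmetric_vec p (tvec p s 1 1 m)" by (rule vec_sym[OF p2])
      ultimately show "\<exists>v. is_eigvec p v lam \<and> v \<in> E_K_perp p \<and> symmetric_vec p v" by blast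
    }
  qed
  have P3: "\<forall>lam>4. (\<exists>v. is_eigvec p v lam \<and> v \<in> E_K_perp p \<and> antisymmetric_vec p v)
                  \<longleftrightarrow> F_A p lam = 0"
  proof (intro allI impI iffI)
    fix lam :: real assume lam: "lam > 4"
    {
      assume "\<exists>v. is_eigvec p v lam \<and> v \<in> E_K_perp p \<and> antisymmetric_vec p v"
      then obtain v where H: "is_eigvec p v lam" "v \<in> E_K_perp p" "antisymmetric_vec p v" by blast
      define c d m where "c = v 0" and "d = v (-int p + 1)" and "m = v (-1)"
      note S = eig_setup[OF p5 lam H(1,2), folded c_def d_def m_def]
      have vf: "v = tvec p (sigma_plus lam) c d m" using S by blast
      have cd: "d = - c" using H(3) unfolding antisymmetric_vec_def c_def d_def by (metis diff_zero order_refl of_nat_0)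
      show "F_A p lam = 0"
      proof (rule ccontr)
        assume ne: "F_A p lam \<noteq> 0"
        have "F_A p lam * (c - d) = 0" using FA_ident[of p lam c d m] S by simp
        hence c0: "c = 0" "d = 0" using ne cd by auto
        hence "m = 0" using zero_case[OF lam] S by simp
        hence "v = (\<lambda>_. 0)" using vf c0 vec_zero by simp
        thus False using H(1) by (simp add: is_eigvec_def)
      qed
    }
    {
      assume FA: "F_A p lam = 0"
      define s where "s = sigma_plus lam"
      have sa: "\<bar>s\<bar> < 1" using sigma_props[OF lam] s_def by auto
      have rM: "resM lam 1 (-1) 0 = 0" unfolding resM_def by simp
      have rA1: "resA p lam s 1 (-1) 0 = 0" using FA unfolding resA_def F_A_def s_def by (simp add: algebra_simps)
      have rA2: "resA p lam s (-1) 1 0 = 0" using FA unfolding resA_def F_A_def s_def by (simp add: algebra_simps)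
      have "is_eigvec p (tvec p s 1 (-1) 0) lam"
        unfolding is_eigvec_def using vec_l2[OF sa p2] vec_nonzero vec_eig[OF p5 lam s_def rA1 rA2 rM] by simp
      moreover have "tvec p s 1 (-1) 0 \<in> E_K_perp p" by (rule vec_perp[OF sa p2])
      moreover have "antisymmetric_vec p (tvec p s 1 (-1) 0)" by (rule vec_antisym[OF p2])
      ultimately show "\<exists>v. is_eigvec p v lam \<and> v \<in> E_K_perp p \<and> antisymmetric_vec p v" by blast
    }
  qed
  define l0 where "l0 = real p + 1 + 1 / (real p - 1)"
  have l0: "l0 \<in> {real p<..<real p + 2}"
  proof -
    have q: "real p - 1 \<ge> 4" using p5 by simp
    hence "1 / (real p - 1) > 0" "1 / (real p - 1) < 1" by auto
    thus ?thesis unfolding l0_def greaterThanLessThan_iff by linarith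
  qed
  have P4: "\<exists>!lam. lam \<in> {real p<..<real p + 2} \<and> F_A p lam = 0"
  proof (rule ex1I[of _ l0])
    show "l0 \<in> {real p<..<real p + 2} \<and> F_A p l0 = 0" using l0 FA_root_exists[OF p5] l0_def by simp
    fix y assume "y \<in> {real p<..<real p + 2} \<and> F_A p y = 0"
    moreover hence "y > 4" using p5 by auto
    ultimately show "y = l0" using FA_root[OF _ _ p5] l0_def by blast
  qed
  have P5: "\<forall>lam. lam > 4 \<and> (lam \<le> real p \<or> lam \<ge> real p + 2) \<longrightarrow> F_A p lam \<noteq> 0"
  proof (intro allI impI notI)
    fix lam assume H: "lam > 4 \<and> (lam \<le> real p \<or> lam \<ge> real p + 2)" and F: "F_A p lam = 0"
    hence "lam = l0" using FA_root[OF _ F p5] l0_def by simp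
    thus False using H l0 by auto
  qed
  have P6: "\<exists>!lam. lam \<in> {real p<..<real p + 2} \<and> F_S p lam = 0"
  proof -
    obtain x where x: "x \<in> {real p<..<real p + 2}" "F_S p x = 0" using FS_exists[OF p5] by blast
    show ?thesis
    proof (rule ex1I[of _ x])
      show "x \<in> {real p<..<real p + 2} \<and> F_S p x = 0" using x by simp
      fix y assume y: "y \<in> {real p<..<real p + 2} \<and> F_S p y = 0"
      show "y = x" using FS_unique[OF p5, of y x] x y p5 by auto
    qed
  qed
  have P7: "\<forall>lam. lam > 4 \<and> (lam \<le> real p \<or> lam \<ge> real p + 2) \<longrightarrow> F_S p lam \<noteq> 0"
    using FS_none[OF p5] by blast
  show ?thesis using P1 P2 P3 P4 P5 P6 P7 by blast
qed


end
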